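(* Every finitely generated co-Heyting algebra is precompact. Every finitely presented co-Heyting algebra is precompact and Hausdorff.
   Context: A co-Heyting algebra is a bounded distributive lattice $(L,0,1,\vee,\wedge)$ such that $a-b=\min\{c\in L: a\le b\vee c\}$ exists for all $a,b$ (finitely generated/presented in the language $\{0,1,\vee,\wedge,-\}$). For an ideal $I$, $L/I$ is the quotient by $a\equiv_I b\iff(a-b)\vee(b-a)\in I$. $\operatorname{Spec}L$ is the set of prime filters ordered by inclusion; height = foundation rank there; $\operatorname{codim}_La=\min\{\operatorname{height}\mathfrak p: a\in\mathfrak p\}$ ($+\infty$ if none); $dL=\{a:\operatorname{codim}_La\ge d\}$ is an ideal. $L$ is Hausdorff if every nonzero element has finite codimension; $L$ is precompact if $L/dL$ is finite for every positive integer $d$. *)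

theory Defs
  imports Main "HOL-Library.Extended_Nat"
begin

definition co_heyting :: "'a::{bounded_lattice,distrib_lattice} itself \<Rightarrow> bool" where
  "co_heyting _ \<longleftrightarrow>
     (\<forall>a b::'a. \<exists>c. a \<le> sup b c \<and> (\<forall>d. a \<le> sup b d \<longrightarrow> c \<le> d))"

definition cdiff :: "'a::{bounded_lattice,distrib_lattice} \<Rightarrow> 'a \<Rightarrow> 'a" where
  "cdiff a b = (LEAST c. a \<le> sup b c)"

inductive_set gen :: "'a::{bounded_lattice,distrib_lattice} set \<Rightarrow> 'a set" for S where
  gen_base: "x \<in> S \<Longrightarrow> x \<in> gen S"
| gen_bot: "bot \<in> gen S"
| gen_top: "top \<in> gen S"
| gen_sup: "x \<in> gen S \<Longrightarrow> y \<in> gen S \<Longrightarrow> sup x y \<in> gen S"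
| gen_inf: "x \<in> gen S \<Longrightarrow> y \<in> gen S \<Longrightarrow> inf x y \<in> gen S"
| gen_diff: "x \<in> gen S \<Longrightarrow> y \<in> gen S \<Longrightarrow> cdiff x y \<in> gen S"

definition fin_gen :: "'a::{bounded_lattice,distrib_lattice} itself \<Rightarrow> bool" where
  "fin_gen _ \<longleftrightarrow> (\<exists>S::'a set. finite S \<and> gen S = UNIV)"

datatype trm = Var nat | Zero | One | Join trm trm | Meet trm trm | Minus trm trm

primrec tvars :: "trm \<Rightarrow> nat set" where
  "tvars (Var v) = {v}"
| "tvars Zero = {}"
| "tvars One = {}"
| "tvars (Join s t) = tvars s \<union> tvars t"
| "tvars (Meet s t) = tvars s \<union> tvars t"
| "tvars (Minus s t) = tvars s \<union> tvars t"

primrec teval :: "(nat \<Rightarrow> 'a::{bounded_lattice,distrib_lattice}) \<Rightarrow> trm \<Rightarrow> 'a" where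
  "teval g (Var v) = g v"
| "teval g Zero = bot"
| "teval g One = top"
| "teval g (Join s t) = sup (teval g s) (teval g t)"
| "teval g (Meet s t) = inf (teval g s) (teval g t)"
| "teval g (Minus s t) = cdiff (teval g s) (teval g t)"

text \<open>Equational consequence in the variety of co-Heyting algebras
  (equational logic over the standard equational basis: bounded distributive
  lattice laws plus the duals of the Heyting algebra axioms), from the
  relations R between the generators.\<close>
inductive deriv :: "(trm \<times> trm) set \<Rightarrow> trm \<Rightarrow> trm \<Rightarrow> bool" for R where
  d_rel: "(s, t) \<in> R \<Longrightarrow> deriv R s t"
| d_refl: "deriv R t t"
| d_sym: "deriv R s t \<Longrightarrow> deriv R t s"
| d_trans: "deriv R s t \<Longrightarrow> deriv R t u \<Longrightarrow> deriv R s u"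
| d_cjoin: "deriv R s s' \<Longrightarrow> deriv R t t' \<Longrightarrow> deriv R (Join s t) (Join s' t')"
| d_cmeet: "deriv R s s' \<Longrightarrow> deriv R t t' \<Longrightarrow> deriv R (Meet s t) (Meet s' t')"
| d_cminus: "deriv R s s' \<Longrightarrow> deriv R t t' \<Longrightarrow> deriv R (Minus s t) (Minus s' t')"
| a_join_assoc: "deriv R (Join (Join x y) z) (Join x (Join y z))"
| a_join_comm: "deriv R (Join x y) (Join y x)"
| a_meet_assoc: "deriv R (Meet (Meet x y) z) (Meet x (Meet y z))"
| a_meet_comm: "deriv R (Meet x y) (Meet y x)"
| a_absorb1: "deriv R (Join x (Meet x y)) x"
| a_absorb2: "deriv R (Meet x (Join x y)) x"
| a_zero: "deriv R (Join x Zero) x"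
| a_one: "deriv R (Meet x One) x"
| a_distrib: "deriv R (Meet x (Join y z)) (Join (Meet x y) (Meet x z))"
| a_minus_self: "deriv R (Minus x x) Zero"
| a_minus1: "deriv R (Join x (Minus y x)) (Join x y)"
| a_minus2: "deriv R (Join y (Minus y x)) y"
| a_minus3: "deriv R (Minus (Join y z) x) (Join (Minus y x) (Minus z x))"

text \<open>L is finitely presented: generated by g 0, ..., g (n-1), subject to a finite
  set R of relations which hold in L and from which every relation between the
  generators holding in L follows (so L is isomorphic to F_n / theta(R)).\<close>
definition fin_pres :: "'a::{bounded_lattice,distrib_lattice} itself \<Rightarrow> bool" where
  "fin_pres _ \<longleftrightarrow> (\<exists>(n::nat) (g::nat \<Rightarrow> 'a) R.
      finite R \<and>
      (\<forall>(s, t) \<in> R. tvars s \<union> tvars t \<subseteq> {..<n}) \<and>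
      gen (g ` {..<n}) = UNIV \<and>
      (\<forall>(s, t) \<in> R. teval g s = teval g t) \<and>
      (\<forall>s t. tvars s \<subseteq> {..<n} \<longrightarrow> tvars t \<subseteq> {..<n} \<longrightarrow>
             teval g s = teval g t \<longrightarrow> deriv R s t))"

definition prime_filter :: "'a::{bounded_lattice,distrib_lattice} set \<Rightarrow> bool" where
  "prime_filter F \<longleftrightarrow>
     top \<in> F \<and> bot \<notin> F \<and>
     (\<forall>a b. a \<in> F \<longrightarrow> a \<le> b \<longrightarrow> b \<in> F) \<and>
     (\<forall>a b. a \<in> F \<longrightarrow> b \<in> F \<longrightarrow> inf a b \<in> F) \<and>
     (\<forall>a b. sup a b \<in> F \<longrightarrow> a \<in> F \<or> b \<in> F)"

definition Spec :: "'a::{bounded_lattice,distrib_lattice} set set" where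
  "Spec = {F. prime_filter F}"

text \<open>Foundation rank in (Spec, \<subseteq>), valued in enat: height p \<ge> k iff there is a
  strict chain q_0 \<subset> ... \<subset> q_k = p in Spec (infinite ranks / ill-founded
  elements give \<infinity>).\<close>
definition height :: "'a::{bounded_lattice,distrib_lattice} set \<Rightarrow> enat" where
  "height p = Sup {enat k | k. \<exists>q::nat \<Rightarrow> 'a set. q k = p \<and>
       (\<forall>i\<le>k. q i \<in> Spec) \<and> (\<forall>i<k. q i \<subset> q (Suc i))}"

definition codim :: "'a::{bounded_lattice,distrib_lattice} \<Rightarrow> enat" where
  "codim a = Inf {height p | p. p \<in> Spec \<and> a \<in> p}"

definition dideal :: "nat \<Rightarrow> 'a::{bounded_lattice,distrib_lattice} set" where
  "dideal d = {a. codim a \<ge> enat d}"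

definition qrel :: "'a::{bounded_lattice,distrib_lattice} set \<Rightarrow> ('a \<times> 'a) set" where
  "qrel I = {(a, b). sup (cdiff a b) (cdiff b a) \<in> I}"

definition quot :: "'a::{bounded_lattice,distrib_lattice} set \<Rightarrow> 'a set set" where
  "quot I = UNIV // qrel I"

definition precompact :: "'a::{bounded_lattice,distrib_lattice} itself \<Rightarrow> bool" where
  "precompact _ \<longleftrightarrow> (\<forall>d::nat. d > 0 \<longrightarrow> finite (quot (dideal d :: 'a set)))"

definition hausdorff :: "'a::{bounded_lattice,distrib_lattice} itself \<Rightarrow> bool" where
  "hausdorff _ \<longleftrightarrow> (\<forall>a::'a. a \<noteq> bot \<longrightarrow> codim a \<noteq> \<infinity>)"

end

theory Submission
  imports Defs
begin

lemma cdiff_props: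
  assumes CH: "co_heyting TYPE('a::{bounded_lattice,distrib_lattice})"
  shows "(a::'a) \<le> sup b (cdiff a b)" and "a \<le> sup b c \<Longrightarrow> cdiff a b \<le> c"
proof -
  from CH obtain c0 where c0: "a \<le> sup b c0" "\<forall>d. a \<le> sup b d \<longrightarrow> c0 \<le> d"
    unfolding co_heyting_def by blast
  have e: "cdiff a b = c0" unfolding cdiff_def
    by (rule Least_equality) (use c0 in auto)
  show "a \<le> sup b (cdiff a b)" using e c0 by simp
  show "a \<le> sup b c \<Longrightarrow> cdiff a b \<le> c" using e c0 by simp
qed

lemma pf_up: "prime_filter p \<Longrightarrow> a \<in> p \<Longrightarrow> a \<le> b \<Longrightarrow> b \<in> p"
  unfolding prime_filter_def by blast

lemma pf_sup: "prime_filter p \<Longrightarrow> sup a b \<in> p \<longleftrightarrow> a \<in> p \<or> b \<in> p"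
  unfolding prime_filter_def by (meson sup_ge1 sup_ge2)

lemma pf_inf: "prime_filter p \<Longrightarrow> inf a b \<in> p \<longleftrightarrow> a \<in> p \<and> b \<in> p"
  unfolding prime_filter_def by (meson inf_le1 inf_le2)

lemma pf_bot: "prime_filter p \<Longrightarrow> bot \<notin> p"
  unfolding prime_filter_def by blast

lemma pf_top: "prime_filter p \<Longrightarrow> top \<in> p"
  unfolding prime_filter_def by blast

lemma pft:
  fixes F J :: "'a::{bounded_lattice,distrib_lattice} set"
  assumes F1: "F \<noteq> {}" and F2: "\<forall>a b. a\<in>F \<longrightarrow> a\<le>b \<longrightarrow> b\<in>F"
    and F3: "\<forall>a b. a\<in>F \<longrightarrow> b\<in>F \<longrightarrow> inf a b \<in> F"
    and J1: "bot \<in> J" and J2: "\<forall>a b. b\<in>J \<longrightarrow> a\<le>b \<longrightarrow> a\<in>J"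
    and J3: "\<forall>a b. a\<in>J \<longrightarrow> b\<in>J \<longrightarrow> sup a b \<in> J" and FJ: "F \<inter> J = {}"
  shows "\<exists>p. prime_filter p \<and> F \<subseteq> p \<and> p \<inter> J = {}"
proof -
  define isf where "isf G \<longleftrightarrow> G \<noteq> {} \<and> (\<forall>a b. a\<in>G \<longrightarrow> a\<le>b \<longrightarrow> b\<in>G)
     \<and> (\<forall>a b. a\<in>G \<longrightarrow> b\<in>G \<longrightarrow> inf a b \<in> G)" for G :: "'a set"
  define A where "A = {G. isf G \<and> F \<subseteq> G \<and> G \<inter> J = {}}"
  have "\<forall>C\<in>chains A. \<exists>U\<in>A. \<forall>X\<in>C. X \<subseteq> U"
  proof
    fix C assume C: "C \<in> chains A"
    show "\<exists>U\<in>A. \<forall>X\<in>C. X \<subseteq> U"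
    proof (cases "C = {}")
      case True
      have "F \<in> A" using F1 F2 F3 FJ unfolding A_def isf_def by simp
      then show ?thesis using True by blast
    next
      case False
      have CA: "C \<subseteq> A" using C chainsD2 by blast
      have "\<Union>C \<in> A"
        unfolding A_def isf_def
      proof (intro CollectI conjI allI impI)
        show "\<Union>C \<noteq> {}" using False CA unfolding A_def isf_def by blast
        show "F \<subseteq> \<Union>C" using False CA unfolding A_def by blast
        show "\<Union>C \<inter> J = {}" using CA unfolding A_def by auto
        fix a b
        show "a \<in> \<Union>C \<Longrightarrow> a \<le> b \<Longrightarrow> b \<in> \<Union>C" using CA unfolding A_def isf_def by blast
        assume a: "a \<in> \<Union>C" and b: "b \<in> \<Union>C"
        then obtain G1 G2 where G: "G1 \<in> C" "G2 \<in> C" "a \<in> G1" "b \<in> G2" by blast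
        then have "G1 \<subseteq> G2 \<or> G2 \<subseteq> G1" using C chainsD by blast
        then show "inf a b \<in> \<Union>C" using G CA unfolding A_def isf_def by blast
      qed
      then show ?thesis by blast
    qed
  qed
  from Zorn_Lemma2[OF this] obtain M where MA: "M \<in> A" and Mmax: "\<forall>X\<in>A. M \<subseteq> X \<longrightarrow> X = M"
    by blast
  have M1: "M \<noteq> {}" and M2: "\<forall>a b. a\<in>M \<longrightarrow> a\<le>b \<longrightarrow> b\<in>M"
    and M3: "\<forall>a b. a\<in>M \<longrightarrow> b\<in>M \<longrightarrow> inf a b \<in> M" and MF: "F \<subseteq> M" and MJ: "M \<inter> J = {}"
    using MA unfolding A_def isf_def by auto
  have ext: "\<exists>g\<in>M. \<exists>j\<in>J. inf g a \<le> j" if aM: "a \<notin> M" for a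
  proof (rule ccontr)
    assume nc: "\<not> ?thesis"
    define G where "G = {x. \<exists>g\<in>M. inf g a \<le> x}"
    have "G \<in> A" unfolding A_def isf_def
    proof (intro CollectI conjI allI impI)
      show "G \<noteq> {}" unfolding G_def using M1 by blast
      show "F \<subseteq> G" unfolding G_def using MF M2 inf_le1 by blast
      show "G \<inter> J = {}" unfolding G_def using nc by auto
      fix x y
      show "x \<in> G \<Longrightarrow> x \<le> y \<Longrightarrow> y \<in> G" unfolding G_def using order_trans by blast
      assume "x \<in> G" "y \<in> G"
      then obtain g1 g2 where "g1 \<in> M" "g2 \<in> M" "inf g1 a \<le> x" "inf g2 a \<le> y"
        unfolding G_def by blast
      moreover have "inf (inf g1 g2) a \<le> inf x y"
        using calculation by (meson inf.cobounded1 inf.cobounded2 le_inf_iff order_trans)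
      ultimately show "inf x y \<in> G" unfolding G_def using M3 by blast
    qed
    moreover have "M \<subseteq> G" unfolding G_def using inf_le1 by blast
    moreover have "a \<in> G" unfolding G_def using M1 inf_le2 by blast
    ultimately have "G = M" using Mmax by blast
    then show False using \<open>a \<in> G\<close> aM by blast
  qed
  have "prime_filter M" unfolding prime_filter_def
  proof (intro conjI allI impI)
    show "top \<in> M" using M1 M2 by auto
    show "bot \<notin> M" using MJ J1 by blast
    show "\<And>a b. a \<in> M \<Longrightarrow> a \<le> b \<Longrightarrow> b \<in> M" using M2 by blast
    show "\<And>a b. a \<in> M \<Longrightarrow> b \<in> M \<Longrightarrow> inf a b \<in> M" using M3 by blast
    fix a b assume ab: "sup a b \<in> M"
    show "a \<in> M \<or> b \<in> M"
    proof (rule ccontr)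
      assume "\<not> (a \<in> M \<or> b \<in> M)"
      then obtain g1 j1 g2 j2 where g: "g1 \<in> M" "j1 \<in> J" "inf g1 a \<le> j1"
        "g2 \<in> M" "j2 \<in> J" "inf g2 b \<le> j2" using ext by meson
      define g where "g = inf g1 g2"
      have "inf g (sup a b) \<in> M" using M3 g ab unfolding g_def by blast
      moreover have "inf g (sup a b) = sup (inf g a) (inf g b)" by (rule inf_sup_distrib1)
      moreover have "sup (inf g a) (inf g b) \<le> sup j1 j2" unfolding g_def using g
        by (meson inf.cobounded1 inf.cobounded2 le_infI le_infI1 le_infI2 order_trans sup.mono)
      moreover have "sup j1 j2 \<in> J" using J3 g by blast
      ultimately have "inf g (sup a b) \<in> J" using J2 by metis
      then show False using MJ \<open>inf g (sup a b) \<in> M\<close> by blast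
    qed
  qed
  then show ?thesis using MF MJ by blast
qed


lemma cdiff_mem:
  assumes CH: "co_heyting TYPE('a::{bounded_lattice,distrib_lattice})"
    and p: "prime_filter (p::'a set)"
  shows "cdiff a b \<in> p \<longleftrightarrow> (\<exists>q. prime_filter q \<and> q \<subseteq> p \<and> a \<in> q \<and> b \<notin> q)"
proof
  assume "\<exists>q. prime_filter q \<and> q \<subseteq> p \<and> a \<in> q \<and> b \<notin> q"
  then obtain q where q: "prime_filter q" "q \<subseteq> p" "a \<in> q" "b \<notin> q" by blast
  have "sup b (cdiff a b) \<in> q" using pf_up[OF q(1) q(3) cdiff_props(1)[OF CH]] .
  then show "cdiff a b \<in> p" using q pf_sup by blast
next
  assume ap: "cdiff a b \<in> p"
  define F where "F = {x. a \<le> x}"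
  define J where "J = {x. \<exists>y. y \<notin> p \<and> x \<le> sup b y}"
  have "\<exists>q. prime_filter q \<and> F \<subseteq> q \<and> q \<inter> J = {}"
  proof (rule pft)
    show "F \<noteq> {}" unfolding F_def by blast
    show "\<forall>x y. x \<in> F \<longrightarrow> x \<le> y \<longrightarrow> y \<in> F" unfolding F_def by auto
    show "\<forall>x y. x \<in> F \<longrightarrow> y \<in> F \<longrightarrow> inf x y \<in> F" unfolding F_def by auto
    show "bot \<in> J" unfolding J_def using pf_bot[OF p] by (auto intro!: exI[of _ bot])
    show "\<forall>x y. y \<in> J \<longrightarrow> x \<le> y \<longrightarrow> x \<in> J"
    proof (intro allI impI)
      fix x y assume "y \<in> J" "x \<le> y"
      then obtain z where "z \<notin> p" "y \<le> sup b z" unfolding J_def by blast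
      moreover have "x \<le> sup b z" using \<open>x \<le> y\<close> calculation(2) by (rule order.trans)
      ultimately show "x \<in> J" unfolding J_def by blast
    qed
    show "\<forall>x y. x \<in> J \<longrightarrow> y \<in> J \<longrightarrow> sup x y \<in> J"
    proof (intro allI impI)
      fix x y assume "x \<in> J" "y \<in> J"
      then obtain y1 y2 where "y1 \<notin> p" "x \<le> sup b y1" "y2 \<notin> p" "y \<le> sup b y2"
        unfolding J_def by blast
      moreover have "sup x y \<le> sup (sup b y1) (sup b y2)" using calculation by (simp add: le_supI1 le_supI2)
      moreover have "sup (sup b y1) (sup b y2) = sup b (sup y1 y2)" by (simp add: sup.assoc sup.commute sup.left_commute)
      moreover have "sup y1 y2 \<notin> p" using calculation pf_sup[OF p] by blast
      ultimately show "sup x y \<in> J" unfolding J_def by auto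
    qed
    show "F \<inter> J = {}"
    proof (rule ccontr)
      assume "F \<inter> J \<noteq> {}"
      then obtain x y where "a \<le> x" "y \<notin> p" "x \<le> sup b y" unfolding F_def J_def by blast
      then have "a \<le> sup b y" using order.trans[of a x "sup b y"] by blast
      then have "cdiff a b \<le> y" by (rule cdiff_props(2)[OF CH])
      then show False using pf_up[OF p ap] \<open>y \<notin> p\<close> by blast
    qed
  qed
  then obtain q where q: "prime_filter q" "F \<subseteq> q" "q \<inter> J = {}" by blast
  have "q \<subseteq> p"
  proof
    fix x assume "x \<in> q"
    show "x \<in> p"
    proof (rule ccontr)
      assume "x \<notin> p"
      then have "x \<in> J" unfolding J_def using sup_ge2[of x b] by blast
      then show False using q(3) \<open>x \<in> q\<close> by blast
    qed
  qed
  moreover have "a \<in> q" using q(2) unfolding F_def by blast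
  moreover have "b \<notin> q"
  proof -
    have "b \<in> J" unfolding J_def using pf_bot[OF p] by (auto intro!: exI[of _ bot])
    then show "b \<notin> q" using q(3) by blast
  qed
  ultimately show "\<exists>q. prime_filter q \<and> q \<subseteq> p \<and> a \<in> q \<and> b \<notin> q" using q(1) by (intro exI[of _ q]) simp
qed

definition chs :: "'a::{bounded_lattice,distrib_lattice} set \<Rightarrow> nat set" where
  "chs p = {k. \<exists>q::nat \<Rightarrow> 'a set. q k = p \<and> (\<forall>i\<le>k. q i \<in> Spec) \<and> (\<forall>i<k. q i \<subset> q (Suc i))}"

lemma height_eq: "height p = Sup (enat ` chs p)"
  unfolding height_def chs_def by (rule arg_cong[where f=Sup]) blast

lemma height_lt: "height p < enat m \<longleftrightarrow> (0 < m \<and> (\<forall>k\<in>chs p. k < m))"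
proof
  assume h: "height p < enat m"
  have "0 < m"
  proof (rule ccontr)
    assume "\<not> 0 < m"
    then have "m = 0" by simp
    with h show False by (simp add: zero_enat_def[symmetric])
  qed
  moreover have "\<forall>k\<in>chs p. k < m"
  proof
    fix k assume "k \<in> chs p"
    then have "enat k \<le> height p" unfolding height_eq by (simp add: Sup_upper)
    then have "enat k < enat m" using h by (rule order.strict_trans1)
    then show "k < m" by simp
  qed
  ultimately show "0 < m \<and> (\<forall>k\<in>chs p. k < m)" by blast
next
  assume a: "0 < m \<and> (\<forall>k\<in>chs p. k < m)"
  have "height p \<le> enat (m - 1)" unfolding height_eq
    by (rule Sup_least) (use a in auto)
  also have "\<dots> < enat m" using a by simp
  finally show "height p < enat m" .
qed

lemma chs0: "prime_filter p \<Longrightarrow> 0 \<in> chs p"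
  unfolding chs_def Spec_def by (rule CollectI, rule exI[of _ "\<lambda>_. p"]) auto

lemma chs_ext:
  assumes q: "prime_filter q" and p: "prime_filter p" and qp: "q \<subset> p" and k: "k \<in> chs q"
  shows "Suc k \<in> chs p"
proof -
  obtain c where c: "c k = q" "\<forall>i\<le>k. c i \<in> Spec" "\<forall>i<k. c i \<subset> c (Suc i)"
    using k unfolding chs_def by blast
  define c' where "c' i = (if i \<le> k then c i else p)" for i
  have "c' (Suc k) = p" unfolding c'_def by simp
  moreover have "\<forall>i\<le>Suc k. c' i \<in> Spec" unfolding c'_def using c p Spec_def by (auto simp: le_Suc_eq)
  moreover have "\<forall>i<Suc k. c' i \<subset> c' (Suc i)"
  proof (intro allI impI)
    fix i assume "i < Suc k"
    then consider "i < k" | "i = k" by linarith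
    then show "c' i \<subset> c' (Suc i)"
      by cases (use c qp in \<open>auto simp: c'_def\<close>)
  qed
  ultimately show ?thesis unfolding chs_def by blast
qed

lemma height_sub:
  assumes "prime_filter q" "prime_filter p" "q \<subseteq> p" "height p < enat d"
  shows "height q < enat d"
proof (cases "q = p")
  case True then show ?thesis using assms by simp
next
  case False
  then have qp: "q \<subset> p" using assms by blast
  show ?thesis unfolding height_lt
    using assms(4) chs_ext[OF assms(1,2) qp] unfolding height_lt by fastforce
qed

lemma height_ssub:
  assumes "prime_filter q" "prime_filter p" "q \<subset> p" "height p < enat (Suc d)"
  shows "height q < enat d"
proof -
  have a: "\<forall>k\<in>chs p. k < Suc d" using assms(4) height_lt by blast
  have "Suc 0 < Suc d" using a chs_ext[OF assms(1-3) chs0[OF assms(1)]] by blast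
  then show ?thesis unfolding height_lt using a chs_ext[OF assms(1-3)] by fastforce
qed


lemma key_eq:
  assumes CH: "co_heyting TYPE('a::{bounded_lattice,distrib_lattice})"
    and p: "prime_filter (p::'a set)" and p': "prime_filter p'"
    and S: "p \<inter> S = p' \<inter> S"
    and Q: "\<forall>q. prime_filter q \<longrightarrow> (q \<subset> p \<longleftrightarrow> q \<subset> p')"
    and x: "x \<in> gen S"
  shows "x \<in> p \<longleftrightarrow> x \<in> p'"
  using x
proof induction
  case (gen_base x) then show ?case using S by blast
next
  case gen_bot then show ?case using pf_bot p p' by blast
next
  case gen_top then show ?case using pf_top p p' by blast
next
  case (gen_sup x y) then show ?case using pf_sup p p' by blast
next
  case (gen_inf x y) then show ?case using pf_inf p p' by blast
next
  case (gen_diff x y)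
  have dir: "\<exists>q. prime_filter q \<and> q \<subseteq> p2 \<and> x \<in> q \<and> y \<notin> q"
    if h1: "\<exists>q. prime_filter q \<and> q \<subseteq> p1 \<and> x \<in> q \<and> y \<notin> q"
      and h2: "p1 = p \<and> p2 = p' \<or> p1 = p' \<and> p2 = p" for p1 p2
  proof -
    obtain q where q: "prime_filter q" "q \<subseteq> p1" "x \<in> q" "y \<notin> q" using h1 by blast
    show ?thesis
    proof (cases "q = p1")
      case True
      then have "x \<in> p2" "y \<notin> p2" using q gen_diff.IH h2 by auto
      then show ?thesis using h2 p p' by blast
    next
      case False
      then have "q \<subset> p2" using q Q h2 by blast
      then show ?thesis using q by blast
    qed
  qed
  show ?case
    using dir[of p p'] dir[of p' p] cdiff_mem[OF CH p] cdiff_mem[OF CH p'] by blast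
qed

lemma fin_low:
  assumes CH: "co_heyting TYPE('a::{bounded_lattice,distrib_lattice})"
    and fS: "finite (S::'a set)" and gS: "gen S = UNIV"
  shows "finite {p::'a set. prime_filter p \<and> height p < enat d}"
proof (induction d)
  case 0
  have "{p::'a set. prime_filter p \<and> height p < enat 0} = {}" using height_lt by blast
  then show ?case by (metis finite.emptyI)
next
  case (Suc d)
  define A where "A = {p::'a set. prime_filter p \<and> height p < enat (Suc d)}"
  define key where "key p = (p \<inter> S, {q. prime_filter q \<and> q \<subset> p})" for p :: "'a set"
  have inj: "inj_on key A"
  proof
    fix p p' assume pA: "p \<in> A" and p'A: "p' \<in> A" and k: "key p = key p'"
    have pp: "prime_filter p" "prime_filter p'" using pA p'A unfolding A_def by auto
    have S: "p \<inter> S = p' \<inter> S" using k unfolding key_def by simp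
    have "{q. prime_filter q \<and> q \<subset> p} = {q. prime_filter q \<and> q \<subset> p'}" using k unfolding key_def by simp
    then have Q: "\<forall>q. prime_filter q \<longrightarrow> (q \<subset> p \<longleftrightarrow> q \<subset> p')" by blast
    have "\<forall>x. x \<in> p \<longleftrightarrow> x \<in> p'" using key_eq[OF CH pp S Q] gS by blast
    then show "p = p'" by blast
  qed
  have "key ` A \<subseteq> Pow S \<times> Pow {p::'a set. prime_filter p \<and> height p < enat d}"
    unfolding key_def A_def using height_ssub by blast
  moreover have "finite (Pow S \<times> Pow {p::'a set. prime_filter p \<and> height p < enat d})"
    using fS Suc.IH by simp
  ultimately have "finite (key ` A)" by (rule finite_subset)
  then show ?case using finite_imageD[OF _ inj] unfolding A_def by blast
qed

lemma codim_ge: "enat d \<le> codim a \<longleftrightarrow> (\<forall>p. prime_filter p \<and> a \<in> p \<longrightarrow> enat d \<le> height p)"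
  unfolding codim_def Spec_def by (auto simp: le_Inf_iff)

lemma qrel_iff:
  assumes CH: "co_heyting TYPE('a::{bounded_lattice,distrib_lattice})"
  shows "((a::'a), b) \<in> qrel (dideal d) \<longleftrightarrow>
    {p. prime_filter p \<and> height p < enat d \<and> a \<in> p} = {p. prime_filter p \<and> height p < enat d \<and> b \<in> p}"
proof -
  have "(a, b) \<in> qrel (dideal d) \<longleftrightarrow>
      (\<forall>p. prime_filter p \<and> sup (cdiff a b) (cdiff b a) \<in> p \<longrightarrow> enat d \<le> height p)"
    unfolding qrel_def dideal_def using codim_ge by simp
  also have "\<dots> \<longleftrightarrow>
      (\<forall>p. prime_filter p \<and> height p < enat d \<longrightarrow> cdiff a b \<notin> p \<and> cdiff b a \<notin> p)"
    by (meson not_le pf_sup)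
  also have "\<dots> \<longleftrightarrow> {p. prime_filter p \<and> height p < enat d \<and> a \<in> p} = {p. prime_filter p \<and> height p < enat d \<and> b \<in> p}"
  proof
    assume H: "\<forall>p. prime_filter p \<and> height p < enat d \<longrightarrow> cdiff a b \<notin> p \<and> cdiff b a \<notin> p"
    have "a \<in> p \<longleftrightarrow> b \<in> p" if "prime_filter p" "height p < enat d" for p
      using H that cdiff_mem[OF CH that(1), of a b] cdiff_mem[OF CH that(1), of b a] by blast
    then show "{p. prime_filter p \<and> height p < enat d \<and> a \<in> p} = {p. prime_filter p \<and> height p < enat d \<and> b \<in> p}"
      by blast
  next
    assume E: "{p. prime_filter p \<and> height p < enat d \<and> a \<in> p} = {p. prime_filter p \<and> height p < enat d \<and> b \<in> p}"
    have "cdiff x y \<notin> p" if t1: "prime_filter p" and t2: "height p < enat d" and t3: "x = a \<and> y = b \<or> x = b \<and> y = a" for p x y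
    proof
      assume "cdiff x y \<in> p"
      then obtain q where q: "prime_filter q" "q \<subseteq> p" "x \<in> q" "y \<notin> q"
        using cdiff_mem[OF CH t1] by blast
      have "height q < enat d" using height_sub[OF q(1) t1 q(2) t2] .
      then show False using E q t3 by blast
    qed
    then show "\<forall>p. prime_filter p \<and> height p < enat d \<longrightarrow> cdiff a b \<notin> p \<and> cdiff b a \<notin> p"
      by blast
  qed
  finally show ?thesis .
qed

lemma precompact_of_gen:
  assumes CH: "co_heyting TYPE('a::{bounded_lattice,distrib_lattice})"
    and fS: "finite (S::'a set)" and gS: "gen S = UNIV"
  shows "precompact TYPE('a)"
  unfolding precompact_def
proof (intro allI impI)
  fix d :: nat
  define Lo where "Lo = {p::'a set. prime_filter p \<and> height p < enat d}"
  define phi where "phi x = {p. prime_filter p \<and> height p < enat d \<and> x \<in> p}" for x :: 'a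
  have fL: "finite Lo" unfolding Lo_def by (rule fin_low[OF CH fS gS])
  have "quot (dideal d :: 'a set) \<subseteq> (\<lambda>T. {b. phi b = T}) ` Pow Lo"
  proof
    fix C assume "C \<in> quot (dideal d :: 'a set)"
    then obtain a where C: "C = qrel (dideal d) `` {a}" unfolding quot_def quotient_def by blast
    have "C = {b. phi b = phi a}" unfolding C phi_def using qrel_iff[OF CH] by blast
    moreover have "phi a \<in> Pow Lo" unfolding phi_def Lo_def by blast
    ultimately show "C \<in> (\<lambda>T. {b. phi b = T}) ` Pow Lo" by blast
  qed
  moreover have "finite ((\<lambda>T. {b. phi b = T}) ` Pow Lo)" using fL by simp
  ultimately show "finite (quot (dideal d :: 'a set))" by (rule finite_subset)
qed

primrec subt :: "trm \<Rightarrow> trm set" where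
  "subt (Var v) = {Var v}"
| "subt Zero = {Zero}"
| "subt One = {One}"
| "subt (Join s t) = insert (Join s t) (subt s \<union> subt t)"
| "subt (Meet s t) = insert (Meet s t) (subt s \<union> subt t)"
| "subt (Minus s t) = insert (Minus s t) (subt s \<union> subt t)"

lemma finite_subt: "finite (subt t)" by (induct t) auto
lemma self_subt: "t \<in> subt t" by (cases t) auto

inductive_set lat :: "'a::{bounded_lattice,distrib_lattice} set \<Rightarrow> 'a set" for X where
  lat_base: "x \<in> X \<Longrightarrow> x \<in> lat X"
| lat_bot: "bot \<in> lat X"
| lat_top: "top \<in> lat X"
| lat_sup: "x \<in> lat X \<Longrightarrow> y \<in> lat X \<Longrightarrow> sup x y \<in> lat X"
| lat_inf: "x \<in> lat X \<Longrightarrow> y \<in> lat X \<Longrightarrow> inf x y \<in> lat X"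

lemma lat_empty: "lat ({}::'a::{bounded_lattice,distrib_lattice} set) \<subseteq> {bot, top}"
proof
  fix x :: 'a assume "x \<in> lat {}"
  then show "x \<in> {bot, top}" by induction auto
qed

lemma inf_ident:
  fixes x u1 u2 v1 v2 :: "'a::distrib_lattice"
  shows "inf (sup u1 (inf x v1)) (sup u2 (inf x v2)) =
    sup (inf u1 u2) (inf x (sup (inf v1 u2) (sup (inf u1 v2) (inf v1 v2))))"
  by (simp only: inf_sup_distrib1 inf_sup_distrib2) (simp add: inf_aci sup_aci)

lemma sup_ident:
  fixes x u1 u2 v1 v2 :: "'a::distrib_lattice"
  shows "sup (sup u1 (inf x v1)) (sup u2 (inf x v2)) = sup (sup u1 u2) (inf x (sup v1 v2))"
  by (simp add: inf_sup_distrib1 sup_assoc sup_left_commute sup_commute)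

lemma lat_insert:
  "lat (insert x X) \<subseteq> (\<lambda>(u, v). sup u (inf x v)) ` (lat X \<times> (lat X::'a::{bounded_lattice,distrib_lattice} set))"
proof
  fix y :: 'a assume "y \<in> lat (insert x X)"
  then have "\<exists>u\<in>lat X. \<exists>v\<in>lat X. y = sup u (inf x v)"
  proof induction
    case (lat_base y)
    then show ?case
    proof
      assume "y = x"
      moreover have "x = sup bot (inf x top)" by simp
      ultimately show ?thesis using lat.lat_bot lat.lat_top by blast
    next
      assume "y \<in> X"
      moreover have "y = sup y (inf x bot)" by simp
      ultimately show ?thesis using lat.lat_base lat.lat_bot by blast
    qed
  next
    case lat_bot
    have "(bot::'a) = sup bot (inf x bot)" by simp
    then show ?case using lat.lat_bot by blast
  next
    case lat_top
    have "(top::'a) = sup top (inf x top)" by simp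
    then show ?case using lat.lat_top by blast
  next
    case (lat_sup y z)
    then obtain u1 v1 u2 v2 where "u1 \<in> lat X" "v1 \<in> lat X" "y = sup u1 (inf x v1)"
      "u2 \<in> lat X" "v2 \<in> lat X" "z = sup u2 (inf x v2)" by blast
    note uv = this
    have "sup y z = sup (sup u1 u2) (inf x (sup v1 v2))" unfolding uv(3,6) by (rule sup_ident)
    moreover have "sup u1 u2 \<in> lat X" using uv(1,4) by (rule lat.lat_sup)
    moreover have "sup v1 v2 \<in> lat X" using uv(2,5) by (rule lat.lat_sup)
    ultimately show ?case by blast
  next
    case (lat_inf y z)
    then obtain u1 v1 u2 v2 where "u1 \<in> lat X" "v1 \<in> lat X" "y = sup u1 (inf x v1)"
      "u2 \<in> lat X" "v2 \<in> lat X" "z = sup u2 (inf x v2)" by blast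
    note uv = this
    have "inf y z = sup (inf u1 u2) (inf x (sup (inf v1 u2) (sup (inf u1 v2) (inf v1 v2))))"
      unfolding uv(3,6) by (rule inf_ident)
    moreover have "sup (inf v1 u2) (sup (inf u1 v2) (inf v1 v2)) \<in> lat X"
      by (intro lat.lat_sup lat.lat_inf uv(1,2,4,5))
    moreover have "inf u1 u2 \<in> lat X" using uv(1,4) by (rule lat.lat_inf)
    ultimately show ?case by blast
  qed
  then show "y \<in> (\<lambda>(u, v). sup u (inf x v)) ` (lat X \<times> lat X)" by auto
qed

lemma finite_lat: "finite X \<Longrightarrow> finite (lat (X::'a::{bounded_lattice,distrib_lattice} set))"
proof (induction rule: finite_induct)
  case empty then show ?case using lat_empty finite_subset by blast
next
  case (insert x F)
  then show ?case using lat_insert[of x F] finite_subset by blast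
qed

definition mD :: "'a::{bounded_lattice,distrib_lattice} set \<Rightarrow> 'a \<Rightarrow> 'a \<Rightarrow> 'a" where
  "mD D x y = (THE c. c \<in> D \<and> x \<le> sup y c \<and> (\<forall>c'\<in>D. x \<le> sup y c' \<longrightarrow> c \<le> c'))"

lemma mD_ex:
  assumes fX: "finite X" and x: "x \<in> lat X" and y: "y \<in> lat X"
  shows "\<exists>c. c \<in> lat X \<and> x \<le> sup y c \<and> (\<forall>c'\<in>lat X. x \<le> sup y c' \<longrightarrow> c \<le> c')"
proof -
  define C where "C = {c \<in> lat X. x \<le> sup y c}"
  have fC: "finite C" unfolding C_def using finite_lat[OF fX] by simp
  have "x \<in> C" unfolding C_def using x by simp
  then obtain m where m: "m \<in> C" "\<forall>b\<in>C. b \<le> m \<longrightarrow> m = b"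
    using finite_has_minimal[OF fC] by blast
  have "m \<le> c'" if c': "c' \<in> lat X" "x \<le> sup y c'" for c'
  proof -
    have "inf m c' \<in> C" unfolding C_def using m(1) c' lat_inf unfolding C_def
      by (auto simp: sup_inf_distrib1)
    then have "m = inf m c'" using m(2) by simp
    then have "inf m c' = m" by simp
    then show ?thesis by (simp add: le_iff_inf)
  qed
  then show ?thesis using m(1) unfolding C_def by blast
qed

lemma mD_char:
  assumes fX: "finite X" and x: "x \<in> lat X" and y: "y \<in> lat X"
  shows "mD (lat X) x y \<in> lat X \<and> x \<le> sup y (mD (lat X) x y) \<and>
    (\<forall>c\<in>lat X. x \<le> sup y c \<longrightarrow> mD (lat X) x y \<le> c)"
proof -
  obtain c where c: "c \<in> lat X \<and> x \<le> sup y c \<and> (\<forall>c'\<in>lat X. x \<le> sup y c' \<longrightarrow> c \<le> c')"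
    using mD_ex[OF assms] by blast
  have "mD (lat X) x y = c" unfolding mD_def
    by (rule the_equality) (use c in \<open>auto intro: order.antisym\<close>)
  then show ?thesis using c by simp
qed

lemma mD_eq:
  assumes fX: "finite X" and x: "x \<in> lat X" and y: "y \<in> lat X"
    and c: "c \<in> lat X" "x \<le> sup y c" "\<forall>c'\<in>lat X. x \<le> sup y c' \<longrightarrow> c \<le> c'"
  shows "mD (lat X) x y = c"
proof -
  have "mD (lat X) x y \<le> c" using mD_char[OF assms(1-3)] c by blast
  moreover have "c \<le> mD (lat X) x y" using mD_char[OF assms(1-3)] c by blast
  ultimately show ?thesis by (rule order.antisym)
qed

lemma mD_law0: assumes "finite X" "x \<in> lat X" shows "mD (lat X) x x = bot"
proof -
  have "mD (lat X) x x \<le> bot" using mD_char[OF assms(1,2,2)] lat_bot[of X] by simp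
  then show ?thesis by (simp add: bot_unique)
qed

lemma mD_law1: assumes "finite X" "x \<in> lat X" "y \<in> lat X"
  shows "sup x (mD (lat X) y x) = sup x y"
proof -
  have A: "mD (lat X) y x \<le> y" using mD_char[OF assms(1,3,2)] assms(3) by simp
  have B: "y \<le> sup x (mD (lat X) y x)" using mD_char[OF assms(1,3,2)] by simp
  show ?thesis using A B by (simp add: order.antisym sup.coboundedI2)
qed

lemma mD_law2: assumes "finite X" "x \<in> lat X" "y \<in> lat X"
  shows "sup y (mD (lat X) y x) = y"
  using mD_char[OF assms(1,3,2)] assms(3) by (simp add: sup.absorb1)

lemma mD_law3: assumes "finite X" "x \<in> lat X" "y \<in> lat X" "z \<in> lat X"
  shows "mD (lat X) (sup y z) x = sup (mD (lat X) y x) (mD (lat X) z x)"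
proof -
  have yz: "sup y z \<in> lat X" using assms lat_sup by blast
  note Y = mD_char[OF assms(1,3,2)] and Z = mD_char[OF assms(1,4,2)]
    and YZ = mD_char[OF assms(1) yz assms(2)]
  have "sup (mD (lat X) y x) (mD (lat X) z x) \<in> lat X" using Y Z lat_sup by blast
  moreover have "sup y z \<le> sup x (sup (mD (lat X) y x) (mD (lat X) z x))"
  proof -
    have "sup y z \<le> sup (sup x (mD (lat X) y x)) (sup x (mD (lat X) z x))"
      using Y Z by (intro sup_mono) auto
    also have "\<dots> = sup x (sup (mD (lat X) y x) (mD (lat X) z x))" by (simp add: ac_simps)
    finally show ?thesis .
  qed
  ultimately have 1: "mD (lat X) (sup y z) x \<le> sup (mD (lat X) y x) (mD (lat X) z x)" using YZ by blast
  have "y \<le> sup x (mD (lat X) (sup y z) x)" using YZ by simp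
  then have 2: "mD (lat X) y x \<le> mD (lat X) (sup y z) x" using Y YZ by blast
  have "z \<le> sup x (mD (lat X) (sup y z) x)" using YZ by simp
  then have 3: "mD (lat X) z x \<le> mD (lat X) (sup y z) x" using Z YZ by blast
  show ?thesis using 1 2 3 by (simp add: order.antisym)
qed


primrec tD :: "'a::{bounded_lattice,distrib_lattice} set \<Rightarrow> (nat \<Rightarrow> 'a) \<Rightarrow> trm \<Rightarrow> 'a" where
  "tD D h (Var v) = h v"
| "tD D h Zero = bot"
| "tD D h One = top"
| "tD D h (Join s t) = sup (tD D h s) (tD D h t)"
| "tD D h (Meet s t) = inf (tD D h s) (tD D h t)"
| "tD D h (Minus s t) = mD D (tD D h s) (tD D h t)"

lemma tD_in: assumes fX: "finite X" and h: "\<forall>v. h v \<in> lat X" shows "tD (lat X) h t \<in> lat X"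
proof (induction t)
  case (Minus s t) then show ?case using mD_char[OF fX] by simp
qed (use h lat.intros in auto)

lemma tD_sound:
  assumes fX: "finite X" and h: "\<forall>v. h v \<in> lat X"
    and RH: "\<forall>(s, t)\<in>R. tD (lat X) h s = tD (lat X) h t"
    and d: "deriv R s t"
  shows "tD (lat X) h s = tD (lat X) h t"
  using d
proof induction
  case (d_rel s t) then show ?case using RH by blast
next
  case (a_absorb1 x y) then show ?case by (simp add: sup_inf_absorb)
next
  case (a_absorb2 x y) then show ?case by (simp add: inf_sup_absorb)
next
  case (a_distrib x y z) then show ?case by (simp add: inf_sup_distrib1)
next
  case (a_minus_self x) then show ?case using mD_law0[OF fX tD_in[OF fX h]] by simp
next
  case (a_minus1 x y) then show ?case using mD_law1[OF fX tD_in[OF fX h] tD_in[OF fX h]] by simp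
next
  case (a_minus2 y x) then show ?case using mD_law2[OF fX tD_in[OF fX h] tD_in[OF fX h]] by simp
next
  case (a_minus3 y z x) then show ?case
    using mD_law3[OF fX tD_in[OF fX h] tD_in[OF fX h] tD_in[OF fX h]] by simp
qed (simp_all add: ac_simps)


lemma tD_agree:
  assumes CH: "co_heyting TYPE('a::{bounded_lattice,distrib_lattice})"
    and fX: "finite (X::'a set)"
    and hg: "\<forall>v<n. h v = g v"
    and sub: "\<forall>u\<in>subt t. teval g u \<in> lat X"
    and tv: "tvars t \<subseteq> {..<n}"
  shows "tD (lat X) h t = teval g t"
  using sub tv
proof (induction t)
  case (Var v) then show ?case using hg by simp
next
  case (Join s t) then show ?case by simp
next
  case (Meet s t) then show ?case by simp
next
  case (Minus s t)
  then have es: "tD (lat X) h s = teval g s" and et: "tD (lat X) h t = teval g t"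
    and ins: "teval g s \<in> lat X" and int: "teval g t \<in> lat X"
    and inm: "cdiff (teval g s) (teval g t) \<in> lat X"
    using self_subt by auto
  have "mD (lat X) (teval g s) (teval g t) = cdiff (teval g s) (teval g t)"
    by (rule mD_eq[OF fX ins int inm]) (use cdiff_props[OF CH] in auto)
  then show ?case using es et by simp
qed simp_all

lemma gen_term:
  assumes "x \<in> gen (g ` {..<n})"
  shows "\<exists>t. tvars t \<subseteq> {..<n} \<and> teval g t = x"
  using assms
proof induction
  case (gen_base x)
  then obtain v where "v < n" "x = g v" by blast
  then show ?case by (intro exI[of _ "Var v"]) simp
next
  case gen_bot show ?case by (intro exI[of _ Zero]) simp
next
  case gen_top show ?case by (intro exI[of _ One]) simp
next
  case (gen_sup x y)
  then obtain s t where "tvars s \<subseteq> {..<n}" "teval g s = x" "tvars t \<subseteq> {..<n}" "teval g t = y" by blast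
  then show ?case by (intro exI[of _ "Join s t"]) simp
next
  case (gen_inf x y)
  then obtain s t where "tvars s \<subseteq> {..<n}" "teval g s = x" "tvars t \<subseteq> {..<n}" "teval g t = y" by blast
  then show ?case by (intro exI[of _ "Meet s t"]) simp
next
  case (gen_diff x y)
  then obtain s t where "tvars s \<subseteq> {..<n}" "teval g s = x" "tvars t \<subseteq> {..<n}" "teval g t = y" by blast
  then show ?case by (intro exI[of _ "Minus s t"]) simp
qed

lemma strict_chain:
  assumes "\<forall>i<k. c i \<subset> c (Suc i)"
  shows "i < j \<Longrightarrow> j \<le> k \<Longrightarrow> c i \<subset> c j"
proof (induction j)
  case 0 then show ?case by simp
next
  case (Suc j)
  then have "c j \<subset> c (Suc j)" using assms by simp
  then show ?case using Suc by (cases "i = j") auto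
qed


lemma hausdorff_of_pres:
  assumes CH: "co_heyting TYPE('a::{bounded_lattice,distrib_lattice})"
    and fR: "finite R"
    and Rv: "\<forall>(s, t) \<in> R. tvars s \<union> tvars t \<subseteq> {..<n}"
    and gg: "gen ((g::nat \<Rightarrow> 'a) ` {..<n}) = UNIV"
    and Rg: "\<forall>(s, t) \<in> R. teval g s = teval g t"
    and cmp: "\<forall>s t. tvars s \<subseteq> {..<n} \<longrightarrow> tvars t \<subseteq> {..<n} \<longrightarrow>
             teval g s = teval g t \<longrightarrow> deriv R s t"
  shows "hausdorff TYPE('a)"
  unfolding hausdorff_def
proof (intro allI impI)
  fix a :: 'a assume a0: "a \<noteq> bot"
  obtain ta where ta: "tvars ta \<subseteq> {..<n}" "teval g ta = a" using gen_term[of a g n] gg by blast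
  define U where "U = \<Union> ((\<lambda>(s, t). subt s \<union> subt t) ` R) \<union> subt ta \<union> Var ` {..<n}"
  define X where "X = teval g ` U"
  define D where "D = lat X"
  have fU: "finite U" unfolding U_def using fR finite_subt by auto
  have fX: "finite X" unfolding X_def using fU by simp
  define h where "h v = (if v < n then g v else bot)" for v
  have hD: "\<forall>v. h v \<in> lat X"
  proof
    fix v show "h v \<in> lat X"
    proof (cases "v < n")
      case True
      then have "Var v \<in> U" unfolding U_def by blast
      then have "g v \<in> X" unfolding X_def by force
      then show ?thesis unfolding h_def using True lat.lat_base by simp
    qed (simp add: h_def lat.lat_bot)
  qed
  have hg: "\<forall>v<n. h v = g v" unfolding h_def by simp
  have agree: "tD (lat X) h t = teval g t" if "subt t \<subseteq> U" "tvars t \<subseteq> {..<n}" for t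
    by (rule tD_agree[OF CH fX hg _ that(2)]) (use that(1) in \<open>auto simp: X_def intro!: lat.lat_base\<close>)
  have RH: "\<forall>(s, t)\<in>R. tD (lat X) h s = tD (lat X) h t"
  proof (intro ballI, clarify)
    fix s t assume st: "(s, t) \<in> R"
    have "subt s \<subseteq> U" "subt t \<subseteq> U" unfolding U_def using st by auto
    moreover have "tvars s \<subseteq> {..<n}" "tvars t \<subseteq> {..<n}" using Rv st by auto
    ultimately show "tD (lat X) h s = tD (lat X) h t" using agree Rg st by auto
  qed
  define rep where "rep x = (SOME t. tvars t \<subseteq> {..<n} \<and> teval g t = x)" for x
  have rep: "tvars (rep x) \<subseteq> {..<n} \<and> teval g (rep x) = x" for x
    unfolding rep_def by (rule someI_ex) (use gen_term[of x g n] gg in blast)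
  define f where "f x = tD (lat X) h (rep x)" for x
  have fterm: "f (teval g t) = tD (lat X) h t" if "tvars t \<subseteq> {..<n}" for t
  proof -
    have "deriv R (rep (teval g t)) t" using cmp rep that by blast
    then show ?thesis unfolding f_def by (rule tD_sound[OF fX hD RH])
  qed
  have fD: "f x \<in> lat X" for x unfolding f_def by (rule tD_in[OF fX hD])
  have fsup: "f (sup x y) = sup (f x) (f y)" for x y
  proof -
    have "f (sup x y) = f (teval g (Join (rep x) (rep y)))" using rep by simp
    also have "\<dots> = tD (lat X) h (Join (rep x) (rep y))" by (rule fterm) (use rep in simp)
    finally have "f (sup x y) = tD (lat X) h (Join (rep x) (rep y))" .
    then show ?thesis unfolding f_def by simp
  qed
  have fdiff: "f (cdiff x y) = mD (lat X) (f x) (f y)" for x y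
  proof -
    have "f (cdiff x y) = f (teval g (Minus (rep x) (rep y)))" using rep by simp
    also have "\<dots> = tD (lat X) h (Minus (rep x) (rep y))" by (rule fterm) (use rep in simp)
    finally have "f (cdiff x y) = tD (lat X) h (Minus (rep x) (rep y))" .
    then show ?thesis unfolding f_def by simp
  qed
  have fbot: "f bot = bot" using fterm[of Zero] by simp
  have fa: "f a \<noteq> bot"
  proof -
    have "f a = tD (lat X) h ta" using fterm ta by blast
    also have "\<dots> = a" using agree[of ta] ta unfolding U_def by auto
    finally show ?thesis using a0 by simp
  qed
  have fmono: "f x \<le> f y" if xy: "x \<le> y" for x y
  proof -
    have "f y = sup (f x) (f y)" using fsup[of x y] xy by (simp add: sup.absorb2)
    then show ?thesis using sup.cobounded1[of "f x" "f y"] by simp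
  qed
  define I where "I = {x. f x = bot}"
  have "\<exists>p. prime_filter p \<and> {x. a \<le> x} \<subseteq> p \<and> p \<inter> I = {}"
  proof (rule pft)
    show "{x. a \<le> x} \<noteq> {}" by blast
    show "\<forall>x y. x \<in> {x. a \<le> x} \<longrightarrow> x \<le> y \<longrightarrow> y \<in> {x. a \<le> x}" by auto
    show "\<forall>x y. x \<in> {x. a \<le> x} \<longrightarrow> y \<in> {x. a \<le> x} \<longrightarrow> inf x y \<in> {x. a \<le> x}" by auto
    show "bot \<in> I" unfolding I_def using fbot by simp
    show "\<forall>x y. y \<in> I \<longrightarrow> x \<le> y \<longrightarrow> x \<in> I"
    proof (intro allI impI)
      fix x y assume "y \<in> I" "x \<le> y"
      then show "x \<in> I" unfolding I_def using fmono[OF \<open>x \<le> y\<close>] by (simp add: bot_unique)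
    qed
    show "\<forall>x y. x \<in> I \<longrightarrow> y \<in> I \<longrightarrow> sup x y \<in> I" unfolding I_def using fsup by simp
    show "{x. a \<le> x} \<inter> I = {}"
    proof (rule ccontr)
      assume "{x. a \<le> x} \<inter> I \<noteq> {}"
      then obtain x where "a \<le> x" "f x = bot" unfolding I_def by blast
      then show False using fmono[of a x] fa by (simp add: bot_unique)
    qed
  qed
  then obtain p where p: "prime_filter p" "a \<in> p" "p \<inter> I = {}" by blast
  have sat: "y \<in> q" if q: "prime_filter q" "q \<inter> I = {}" "x \<in> q" "f x = f y" for q x y
  proof -
    have "f (cdiff x y) = bot" using fdiff[of x y] q(4) mD_law0[OF fX fD] by simp
    then have "cdiff x y \<notin> q" using q(2) unfolding I_def by blast
    moreover have "sup y (cdiff x y) \<in> q" using pf_up[OF q(1) q(3) cdiff_props(1)[OF CH]] .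
    ultimately show "y \<in> q" using pf_sup[OF q(1)] by blast
  qed
  have bound: "k < 2 ^ card (lat X)" if k: "k \<in> chs p" for k
  proof -
    obtain c where c: "c k = p" "\<forall>i\<le>k. c i \<in> Spec" "\<forall>i<k. c i \<subset> c (Suc i)"
      using k unfolding chs_def by blast
    have cp: "c i \<subseteq> p" if "i \<le> k" for i
      using strict_chain[OF c(3), of i k] that c(1) by (cases "i = k") auto
    have inj: "inj_on (\<lambda>i. f ` c i) {..k}"
    proof
      fix i j assume i: "i \<in> {..k}" and j: "j \<in> {..k}" and e: "f ` c i = f ` c j"
      have gen_ij: "c i = c j" if ij: "i' \<le> k" "j' \<le> k" "f ` c i' = f ` c j'" "i' < j'" for i' j'
      proof -
        have ss: "c i' \<subset> c j'" using strict_chain[OF c(3) ij(4) ij(2)] .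
        then obtain y where y: "y \<in> c j'" "y \<notin> c i'" by blast
        have "f y \<in> f ` c j'" using y(1) by (rule imageI)
        then have "f y \<in> f ` c i'" using ij(3) by simp
        then obtain x where x: "x \<in> c i'" "f x = f y" by (auto elim!: imageE)
        have "prime_filter (c i')" using c(2) ij(1) unfolding Spec_def by simp
        moreover have "c i' \<inter> I = {}" using cp[OF ij(1)] p(3) by blast
        ultimately have "y \<in> c i'" using sat x by blast
        then show ?thesis using y by blast
      qed
      show "i = j"
      proof (rule ccontr)
        assume "i \<noteq> j"
        then consider "i < j" | "j < i" by linarith
        then show False
        proof cases
          case 1
          then have "c i \<subset> c j" using strict_chain[OF c(3)] j by simp
          moreover have "c i = c j" using gen_ij[of i j] i j e 1 by simp
          ultimately show False by simp
        next
          case 2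
          then have "c j \<subset> c i" using strict_chain[OF c(3)] i by simp
          moreover have "c i = c j" using gen_ij[of j i] i j e 2 by simp
          ultimately show False by simp
        qed
      qed
    qed
    have "(\<lambda>i. f ` c i) ` {..k} \<subseteq> Pow (lat X)" using fD by blast
    then have "card {..k} \<le> card (Pow (lat X))"
      using card_inj_on_le[OF inj] finite_lat[OF fX] by simp
    then show ?thesis using card_Pow[of "lat X"] finite_lat[OF fX] by simp
  qed
  have "height p < enat (2 ^ card (lat X))" unfolding height_lt using bound by simp
  moreover have "codim a \<le> height p" unfolding codim_def Spec_def using p by (auto intro: Inf_lower)
  ultimately have "codim a < enat (2 ^ card (lat X))" by (meson order.strict_trans1)
  then show "codim a \<noteq> \<infinity>"
  proof (intro notI)
    assume "codim a < enat (2 ^ card (lat X))" "codim a = \<infinity>"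
    then show False by simp
  qed
qed


theorem corollary5p5:
  assumes "co_heyting TYPE('a::{bounded_lattice,distrib_lattice})"
  shows "(fin_gen TYPE('a) \<longrightarrow> precompact TYPE('a)) \<and>
         (fin_pres TYPE('a) \<longrightarrow> precompact TYPE('a) \<and> hausdorff TYPE('a))"
proof -
  have P1: "fin_gen TYPE('a) \<longrightarrow> precompact TYPE('a)"
    unfolding fin_gen_def using precompact_of_gen[OF assms] by blast
  have P2: "fin_pres TYPE('a) \<longrightarrow> precompact TYPE('a) \<and> hausdorff TYPE('a)"
  proof
    assume "fin_pres TYPE('a)"
    then obtain n and g :: "nat \<Rightarrow> 'a" and R where
      fR: "finite R" and Rv: "\<forall>(s, t) \<in> R. tvars s \<union> tvars t \<subseteq> {..<n}"
      and gg: "gen (g ` {..<n}) = UNIV"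
      and Rg: "\<forall>(s, t) \<in> R. teval g s = teval g t"
      and cmp: "\<forall>s t. tvars s \<subseteq> {..<n} \<longrightarrow> tvars t \<subseteq> {..<n} \<longrightarrow>
             teval g s = teval g t \<longrightarrow> deriv R s t"
      unfolding fin_pres_def by blast
    have "precompact TYPE('a)" by (rule precompact_of_gen[OF assms _ gg]) simp
    moreover have "hausdorff TYPE('a)" by (rule hausdorff_of_pres[OF assms fR Rv gg Rg cmp])
    ultimately show "precompact TYPE('a) \<and> hausdorff TYPE('a)" by blast
  qed
  show ?thesis using P1 P2 by blast
qed

end
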